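(* Let $R$ be a commutative Bezout domain and let $\Phi=\mathrm{diag}(\varphi_1,\dots,\varphi_t,0,\dots,0)$ be an $n\times n$ $d$-matrix with $\varphi_t\neq0$. Then $\mathbf G_\Phi$ consists exactly of the invertible $n\times n$ matrices $H=(h_{ij})$ such that $h_{ij}=0$ for all $i>t$, $j\le t$, and $\frac{\varphi_i}{\varphi_j}\mid h_{ij}$ for all $1\le j<i\le t$; i.e. $H=\begin{pmatrix}H_1&*\\0&H_2\end{pmatrix}$ with $H_2\in GL_{n-t}(R)$ and $H_1$ a $t\times t$ matrix whose entry in position $(i,j)$, $i>j$, has the form $\frac{\varphi_i}{\varphi_j}h'_{ij}$.
   Context: A commutative Bezout domain is a commutative integral domain with $1\ne0$ in which every finitely generated ideal is principal. A $d$-matrix is a diagonal matrix $\mathrm{diag}(\varphi_1,\dots)$ with $\varphi_i\mid\varphi_{i+1}$. For an $n\times n$ $d$-matrix $\Phi$, the Zelisko group is $\mathbf G_\Phi=\{H\in GL_n(R):\ \exists K\in GL_n(R),\ H\Phi=\Phi K\}$. *)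

theory Defs
  imports "Jordan_Normal_Form.Matrix"
begin

text \<open>A commutative Bezout domain: an integral domain (type class idom, which
includes commutativity and 1 \<noteq> 0) in which every finitely generated ideal is
principal.\<close>
definition bezout_domain :: "'a::idom itself \<Rightarrow> bool" where
  "bezout_domain _ \<longleftrightarrow>
     (\<forall>xs :: 'a list. \<exists>d.
        {(\<Sum>i<length xs. c i * xs ! i) | c. True} = {d * z | z. True})"

text \<open>The n x n diagonal matrix diag(phi 0, ..., phi (t-1), 0, ..., 0) (0-indexed).\<close>
definition dmat :: "nat \<Rightarrow> nat \<Rightarrow> (nat \<Rightarrow> 'a::idom) \<Rightarrow> 'a mat" where
  "dmat n t \<phi> = mat n n (\<lambda>(i, j). if i = j \<and> i < t then \<phi> i else 0)"

definition zelisko_group :: "nat \<Rightarrow> 'a::idom mat \<Rightarrow> 'a mat set" where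
  "zelisko_group n \<Phi> =
     {H \<in> carrier_mat n n. invertible_mat H \<and>
        (\<exists>K \<in> carrier_mat n n. invertible_mat K \<and> H * \<Phi> = \<Phi> * K)}"

end

theory Submission imports Defs "Jordan_Normal_Form.Determinant" begin

lemma mult_entry:
  assumes "A \<in> carrier_mat n n" "B \<in> carrier_mat n n" "i < n" "j < n"
  shows "(A * B) $$ (i,j) = (\<Sum>k\<in>{0..<n}. A$$(i,k) * B$$(k,j))"
  using assms by (simp add: scalar_prod_def)

lemma mult_diag_right:
  assumes "A \<in> carrier_mat n n" "i < n" "j < n"
  shows "(A * mat n n (\<lambda>(i,j). if i=j then d i else 0)) $$ (i,j) = A$$(i,j) * d j"
proof -
  have "(A * mat n n (\<lambda>(i,j). if i=j then d i else 0)) $$ (i,j) = (\<Sum>k\<in>{0..<n}. A$$(i,k) * (if k = j then d k else 0))"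
    using assms by (simp add: scalar_prod_def)
  also have "\<dots> = (\<Sum>k\<in>{0..<n}. if k = j then A$$(i,k) * d k else 0)" by (rule sum.cong) auto
  also have "\<dots> = A$$(i,j) * d j" using assms by (simp add: sum.delta)
  finally show ?thesis .
qed

lemma mult_diag_left:
  assumes "A \<in> carrier_mat n n" "i < n" "j < n"
  shows "(mat n n (\<lambda>(i,j). if i=j then d i else 0) * A) $$ (i,j) = d i * A$$(i,j)"
proof -
  have "(mat n n (\<lambda>(i,j). if i=j then d i else 0) * A) $$ (i,j) = (\<Sum>k\<in>{0..<n}. (if i = k then d i else 0) * A$$(k,j))"
    using assms by (simp add: scalar_prod_def)
  also have "\<dots> = (\<Sum>k\<in>{0..<n}. if k = i then d k * A$$(k,j) else 0)" by (rule sum.cong) auto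
  also have "\<dots> = d i * A$$(i,j)" using assms by (simp add: sum.delta)
  finally show ?thesis .
qed

lemma inv_det:
  fixes A :: "'a::comm_ring_1 mat"
  assumes A: "A \<in> carrier_mat n n"
  shows "invertible_mat A \<longleftrightarrow> det A dvd 1"
proof
  assume "invertible_mat A"
  then obtain B where AB: "A * B = 1\<^sub>m n" and BA: "B * A = 1\<^sub>m (dim_row B)"
    using A unfolding invertible_mat_def inverts_mat_def by auto
  have B: "B \<in> carrier_mat n n"
  proof -
    have "dim_col B = n" using arg_cong[OF AB, of dim_col] by simp
    moreover have "dim_row B = n" using arg_cong[OF BA, of dim_col] A by simp
    ultimately show ?thesis by auto
  qed
  have "det A * det B = 1" using det_mult[OF A B] AB by simp
  then show "det A dvd 1" by (metis dvd_triv_left)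
next
  assume "det A dvd 1"
  then obtain u where u: "det A * u = 1" by (metis dvdE)
  have u': "u * det A = 1" using u by (simp add: mult.commute)
  define B where "B = u \<cdot>\<^sub>m adj_mat A"
  have B: "B \<in> carrier_mat n n" using adj_mat[OF A] B_def by simp
  have "A * B = u \<cdot>\<^sub>m (A * adj_mat A)" unfolding B_def
    using adj_mat[OF A] A by (simp add: mult_smult_distrib)
  also have "\<dots> = 1\<^sub>m n" using adj_mat[OF A] u' by (intro eq_matI) (auto simp: mult.assoc[symmetric])
  finally have AB: "A * B = 1\<^sub>m n" .
  have "B * A = u \<cdot>\<^sub>m (adj_mat A * A)" unfolding B_def
    using adj_mat[OF A] A by (simp add: mult_smult_assoc_mat)
  also have "\<dots> = 1\<^sub>m n" using adj_mat[OF A] u' by (intro eq_matI) (auto simp: mult.assoc[symmetric])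
  finally have BA: "B * A = 1\<^sub>m n" .
  show "invertible_mat A" unfolding invertible_mat_def inverts_mat_def square_mat.simps
    using A B AB BA by auto
qed

theorem theorem2p7:
  fixes \<phi> :: "nat \<Rightarrow> 'a::idom" and n t :: nat
  assumes "bezout_domain TYPE('a)"
    and "1 \<le> t" and "t \<le> n"
    and "\<And>i. Suc i < t \<Longrightarrow> \<phi> i dvd \<phi> (Suc i)"
    and "\<phi> (t - 1) \<noteq> 0"
  shows "zelisko_group n (dmat n t \<phi>) =
    {H \<in> carrier_mat n n. invertible_mat H \<and>
       (\<forall>i j. t \<le> i \<longrightarrow> i < n \<longrightarrow> j < t \<longrightarrow> H $$ (i, j) = 0) \<and>
       (\<forall>i j. j < i \<longrightarrow> i < t \<longrightarrow> (\<exists>q. \<phi> i = q * \<phi> j \<and> q dvd H $$ (i, j)))}"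
proof -
  have dv: "\<phi> j dvd \<phi> i" if "j \<le> i" "i < t" for i j
    using that
  proof (induction i rule: dec_induct)
    case base then show ?case by simp
  next
    case (step m)
    then show ?case using assms(4)[of m] by (meson Suc_lessD dvd_trans)
  qed
  have nz: "\<phi> j \<noteq> 0" if "j < t" for j
  proof -
    have "\<phi> j dvd \<phi> (t - 1)" using dv[of j "t - 1"] that assms(2) by simp
    then show ?thesis using assms(5) by auto
  qed
  define dd where "dd i = (if i < t then \<phi> i else 0)" for i
  have D: "dmat n t \<phi> = mat n n (\<lambda>(i,j). if i=j then dd i else 0)"
    unfolding dmat_def dd_def by (rule eq_matI) auto
  show ?thesis
  proof (rule Set.set_eqI, rule iffI)
    fix H assume "H \<in> zelisko_group n (dmat n t \<phi>)"
    then obtain K where H: "H \<in> carrier_mat n n" "invertible_mat H" and K: "K \<in> carrier_mat n n"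
      and HK: "H * dmat n t \<phi> = dmat n t \<phi> * K"
      unfolding zelisko_group_def by auto
    have ent: "H$$(i,j) * dd j = dd i * K$$(i,j)" if "i < n" "j < n" for i j
      using arg_cong[OF HK, of "\<lambda>M. M $$ (i,j)"] unfolding D
      using mult_diag_right[OF H(1) that] mult_diag_left[OF K that] by simp
    have z: "\<forall>i j. t \<le> i \<longrightarrow> i < n \<longrightarrow> j < t \<longrightarrow> H $$ (i, j) = 0"
    proof (intro allI impI)
      fix i j assume "t \<le> i" "i < n" "j < t"
      then have "H$$(i,j) * \<phi> j = 0" using ent[of i j] assms(3) by (simp add: dd_def)
      then show "H $$ (i, j) = 0" using nz[OF \<open>j < t\<close>] by simp
    qed
    have q: "\<forall>i j. j < i \<longrightarrow> i < t \<longrightarrow> (\<exists>q. \<phi> i = q * \<phi> j \<and> q dvd H $$ (i, j))"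
    proof (intro allI impI)
      fix i j assume ji: "j < i" "i < t"
      obtain q where q: "\<phi> i = \<phi> j * q" using dv[of j i] ji by (auto elim: dvdE)
      have "H$$(i,j) * \<phi> j = \<phi> i * K$$(i,j)" using ent[of i j] ji assms(3) by (simp add: dd_def)
      then have "H$$(i,j) * \<phi> j = (q * K$$(i,j)) * \<phi> j" using q by (simp add: ac_simps)
      then have "H$$(i,j) = q * K$$(i,j)" using nz[of j] ji by simp
      then show "\<exists>q. \<phi> i = q * \<phi> j \<and> q dvd H $$ (i, j)" using q by (auto simp: ac_simps)
    qed
    show "H \<in> {H \<in> carrier_mat n n. invertible_mat H \<and>
       (\<forall>i j. t \<le> i \<longrightarrow> i < n \<longrightarrow> j < t \<longrightarrow> H $$ (i, j) = 0) \<and>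
       (\<forall>i j. j < i \<longrightarrow> i < t \<longrightarrow> (\<exists>q. \<phi> i = q * \<phi> j \<and> q dvd H $$ (i, j)))}"
      using H z q by blast
  next
    fix H assume "H \<in> {H \<in> carrier_mat n n. invertible_mat H \<and>
       (\<forall>i j. t \<le> i \<longrightarrow> i < n \<longrightarrow> j < t \<longrightarrow> H $$ (i, j) = 0) \<and>
       (\<forall>i j. j < i \<longrightarrow> i < t \<longrightarrow> (\<exists>q. \<phi> i = q * \<phi> j \<and> q dvd H $$ (i, j)))}"
    then have H: "H \<in> carrier_mat n n" "invertible_mat H"
      and z: "\<And>i j. t \<le> i \<Longrightarrow> i < n \<Longrightarrow> j < t \<Longrightarrow> H $$ (i, j) = 0"
      and q: "\<And>i j. j < i \<Longrightarrow> i < t \<Longrightarrow> (\<exists>q. \<phi> i = q * \<phi> j \<and> q dvd H $$ (i, j))"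
      by auto
    have ex: "\<exists>k. H$$(i,j) * \<phi> j = \<phi> i * k" if it: "i < t" "j < t" for i j
    proof (cases "j < i")
      case True
      obtain r where r: "\<phi> i = r * \<phi> j" "r dvd H$$(i,j)" using q[OF True it(1)] by blast
      from r(2) obtain c where "H$$(i,j) = r * c" by (auto elim: dvdE)
      note r(1) this
      then show ?thesis by (intro exI[of _ c]) (simp add: ac_simps)
    next
      case False
      then obtain r where "\<phi> j = \<phi> i * r" using dv[of i j] it by (auto elim: dvdE)
      then show ?thesis by (intro exI[of _ "r * H$$(i,j)"]) (simp add: ac_simps)
    qed
    define kk where "kk i j = (SOME k. H$$(i,j) * \<phi> j = \<phi> i * k)" for i j
    have kk: "H$$(i,j) * \<phi> j = \<phi> i * kk i j" if "i < t" "j < t" for i j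
      unfolding kk_def using someI_ex[OF ex[OF that]] .
    define K where "K = mat n n (\<lambda>(i,j). if i < t \<and> j < t then kk i j else if t \<le> i \<and> i = j then 1 else 0)"
    have K: "K \<in> carrier_mat n n" unfolding K_def by simp
    have HK: "H * dmat n t \<phi> = dmat n t \<phi> * K"
    proof (rule eq_matI)
      fix i j assume ij: "i < dim_row (dmat n t \<phi> * K)" "j < dim_col (dmat n t \<phi> * K)"
      then have ij: "i < n" "j < n" using K by (auto simp: dmat_def)
      show "(H * dmat n t \<phi>) $$ (i, j) = (dmat n t \<phi> * K) $$ (i, j)"
        unfolding D mult_diag_right[OF H(1) ij] mult_diag_left[OF K ij]
        using kk[of i j] z[of i j] ij by (auto simp: dd_def K_def)
    qed (use H K in \<open>auto simp: dmat_def\<close>)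
    define ee where "ee i = (if i < t then \<phi> i else 1)" for i
    define P where "P = mat n n (\<lambda>(i,j). if i=j then ee i else 0)"
    define H' where "H' = mat n n (\<lambda>(i,j). if i < t \<and> j < t then H$$(i,j) else if i = j then 1 else 0)"
    define E where "E = mat n n (\<lambda>(i,j). if j < t then (if i = j then 1 else 0) else H$$(i,j))"
    have P: "P \<in> carrier_mat n n" and H': "H' \<in> carrier_mat n n" and E: "E \<in> carrier_mat n n"
      unfolding P_def H'_def E_def by auto
    have HP: "H' * P = P * K"
    proof (rule eq_matI)
      fix i j assume ij: "i < dim_row (P * K)" "j < dim_col (P * K)"
      then have ij: "i < n" "j < n" using K P by auto
      show "(H' * P) $$ (i, j) = (P * K) $$ (i, j)"
        unfolding P_def mult_diag_right[OF H' ij] mult_diag_left[OF K ij]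
        using kk[of i j] ij by (auto simp: ee_def K_def H'_def)
    qed (use H' K P in auto)
    have detP: "det P \<noteq> 0"
    proof -
      have "upper_triangular P" unfolding P_def upper_triangular_def by auto
      then have "det P = prod_list (diag_mat P)" using det_upper_triangular P by blast
      moreover have "0 \<notin> set (diag_mat P)" unfolding diag_mat_def P_def
        using nz by (auto simp: ee_def)
      ultimately show ?thesis by (simp add: prod_list_zero_iff)
    qed
    have "det H' * det P = det P * det K"
    proof -
      have "det (H' * P) = det (P * K)" using HP by simp
      then show ?thesis unfolding det_mult[OF H' P] det_mult[OF P K] .
    qed
    then have dK: "det K = det H'" using detP by (simp add: mult.commute)
    have HE: "H = E * H'"
    proof (rule eq_matI)
      fix i j assume ij: "i < dim_row (E * H')" "j < dim_col (E * H')"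
      then have ij: "i < n" "j < n" using E H' by auto
      show "H $$ (i, j) = (E * H') $$ (i, j)"
      proof (cases "j < t")
        case True
        have "(E * H') $$ (i, j) = (\<Sum>k\<in>{0..<n}. if k = i then (if i < t then H$$(i,j) else 0) else 0)"
          unfolding mult_entry[OF E H' ij] by (rule sum.cong) (use True ij in \<open>auto simp: E_def H'_def\<close>)
        also have "\<dots> = H$$(i,j)" using ij z[of i j] True by (simp add: sum.delta)
        finally show ?thesis by simp
      next
        case False
        have "(E * H') $$ (i, j) = (\<Sum>k\<in>{0..<n}. if k = j then H$$(i,j) else 0)"
          unfolding mult_entry[OF E H' ij] by (rule sum.cong) (use False ij in \<open>auto simp: E_def H'_def\<close>)
        also have "\<dots> = H$$(i,j)" using ij by (simp add: sum.delta)
        finally show ?thesis by simp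
      qed
    qed (use H E H' in auto)
    have "det H dvd 1" using inv_det[OF H(1)] H(2) by simp
    then have "det E * det H' dvd 1" using det_mult[OF E H'] HE by simp
    then have "det K dvd 1" using dK dvd_mult_right by metis
    then have "invertible_mat K" using inv_det[OF K] by simp
    then show "H \<in> zelisko_group n (dmat n t \<phi>)"
      unfolding zelisko_group_def using H K HK by auto
  qed
qed

end
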